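(* Fix $\alpha>0$, $y_0\in\mathrm{dom}\, h$. Let TAA be: $\lambda=2\alpha/(\alpha+\sqrt{\alpha^2+4L\alpha})$, $s_0=\nabla f(y_0)$, $\tilde x_0=y_0$, $x_0=\mathrm{argmin}_x\{\langle s_0,x\rangle+h^\alpha(x)\}$, and for $k\ge0$: $\tilde x_{k+1}=(1-\lambda)y_k+\lambda x_k$, $s_{k+1}=(1-\lambda)s_k+\lambda\nabla f(\tilde x_{k+1})$, $x_{k+1}=\mathrm{argmin}_x\{\langle s_{k+1},x\rangle+h^\alpha(x)\}$, $y_{k+1}=(1-\lambda)y_k+\lambda x_{k+1}$. Let GEM with $\nu^*=Lf^*$ be: $g_0=z_0=\nabla f(y_0)$, $v_{-1}=v_0=\nabla(h^\alpha)^*(-g_0)$, $\tau_0=\alpha/L$, $A_0=1$, $a_{-1}=0$, and for $k\ge0$: $a_k=\frac{\tau_k+\sqrt{\tau_k^2+4\tau_kA_k}}{2}$, $\tau_{k+1}=\tau_k+\alpha a_k/L$, $A_{k+1}=A_k+a_k$, $\hat v_k=v_k+\frac{a_{k-1}}{a_k}(v_k-v_{k-1})$, $g_{k+1}=\mathrm{argmin}_g\{a_k[\langle-\hat v_k,g\rangle+f^*(g)]+\frac{\tau_k}{\alpha}\operatorname{D}_{\nu^*}(g\|g_k)\}$, $z_{k+1}=\frac{A_k}{A_{k+1}}z_k+\frac{a_k}{A_{k+1}}g_{k+1}$, $v_{k+1}=\nabla(h^\alpha)^*(-z_{k+1})$, where $\operatorname{D}_{\nu^*}(g\|g_k)=L[f^*(g)-f^*(g_k)-\langle\tilde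 x_k,g-g_k\rangle]$ (using the subgradient $\tilde x_k\in\partial f^*(g_k)$). Then the two methods are equivalent with, for all $k\ge0$, $\nabla f(\tilde x_k)=g_k$, $s_k=z_k$, and $x_k=v_k$.
   Context: Let $\|\cdot\|$ be a norm on $\mathbb{R}^n$ with dual norm $\|\cdot\|_*$. Let $f:\mathbb{R}^n\to\mathbb{R}$ be convex, differentiable and $L$-smooth ($L>0$) with respect to $\|\cdot\|$, $h:\mathbb{R}^n\to(-\infty,\infty]$ closed proper convex with bounded domain, and $w:\mathbb{R}^n\to[0,+\infty]$ closed, $1$-strongly convex with respect to $\|\cdot\|$ on $\mathrm{dom}\, h$, with $\max_{\mathrm{dom}\, h}w<\infty$. Let $h^\alpha=h+\alpha w$; $^*$ denotes convex conjugate ($(h^\alpha)^*$ is differentiable). *)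

theory Defs
  imports "HOL-Analysis.Analysis"
begin

definition is_norm :: "('a::real_normed_vector \<Rightarrow> real) \<Rightarrow> bool" where
  "is_norm N \<longleftrightarrow> (\<forall>x. 0 \<le> N x) \<and> (\<forall>x. N x = 0 \<longleftrightarrow> x = 0)
     \<and> (\<forall>c x. N (c *\<^sub>R x) = \<bar>c\<bar> * N x) \<and> (\<forall>x y. N (x + y) \<le> N x + N y)"

definition dual_norm :: "('a::real_inner \<Rightarrow> real) \<Rightarrow> 'a \<Rightarrow> real" where
  "dual_norm N g = Sup {g \<bullet> x | x. N x \<le> 1}"

definition L_smooth :: "('a::real_inner \<Rightarrow> real) \<Rightarrow> real \<Rightarrow> ('a \<Rightarrow> real) \<Rightarrow> bool" where
  "L_smooth N L f \<longleftrightarrow> (\<forall>x y gx gy. GDERIV f x :> gx \<longrightarrow> GDERIV f y :> gy \<longrightarrow>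
      dual_norm N (gx - gy) \<le> L * N (x - y))"

definition edom :: "('a \<Rightarrow> ereal) \<Rightarrow> 'a set" where
  "edom h = {x. h x < \<infinity>}"

definition epigraph :: "('a \<Rightarrow> ereal) \<Rightarrow> ('a \<times> real) set" where
  "epigraph h = {(x, t). h x \<le> ereal t}"

definition closed_fun :: "('a::topological_space \<Rightarrow> ereal) \<Rightarrow> bool" where
  "closed_fun h \<longleftrightarrow> closed (epigraph h)"

definition proper_fun :: "('a \<Rightarrow> ereal) \<Rightarrow> bool" where
  "proper_fun h \<longleftrightarrow> (\<forall>x. h x > -\<infinity>) \<and> edom h \<noteq> {}"

definition convex_fun :: "('a::real_vector \<Rightarrow> ereal) \<Rightarrow> bool" where
  "convex_fun h \<longleftrightarrow> convex (epigraph h)"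

definition strongly_convex_on ::
  "('a::real_vector \<Rightarrow> real) \<Rightarrow> 'a set \<Rightarrow> ('a \<Rightarrow> ereal) \<Rightarrow> bool" where
  "strongly_convex_on N S w \<longleftrightarrow> (\<forall>x\<in>S. \<forall>y\<in>S. \<forall>t::real. 0 \<le> t \<longrightarrow> t \<le> 1 \<longrightarrow>
      w (t *\<^sub>R x + (1 - t) *\<^sub>R y) \<le>
        ereal t * w x + ereal (1 - t) * w y - ereal (t * (1 - t) / 2 * (N (x - y))\<^sup>2))"

definition conj :: "('a::real_inner \<Rightarrow> ereal) \<Rightarrow> 'a \<Rightarrow> ereal" where
  "conj F g = (SUP x. ereal (g \<bullet> x) - F x)"

definition is_argmin :: "('a \<Rightarrow> ereal) \<Rightarrow> 'a \<Rightarrow> bool" where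
  "is_argmin F x \<longleftrightarrow> (\<forall>x'. F x \<le> F x')"

end

theory Submission
  imports Defs
begin

lemma grad_min_unique:
  fixes F :: "'a::real_inner \<Rightarrow> real"
  assumes d: "GDERIV F p :> G" and m: "\<forall>p'. F p + (p' - p) \<bullet> u \<le> F p'"
  shows "u = G"
proof -
  have "((\<lambda>p'. F p' - p' \<bullet> u) has_derivative (\<lambda>h. h \<bullet> G - h \<bullet> u)) (at p)"
    using d unfolding gderiv_def by (auto intro!: derivative_eq_intros)
  moreover have "\<forall>y\<in>UNIV. F p - p \<bullet> u \<le> F y - y \<bullet> u"
    using m by (auto simp: inner_diff_left algebra_simps)
  ultimately have "(\<lambda>h. h \<bullet> G - h \<bullet> u) = (\<lambda>v. 0)"
    using differential_zero_maxmin[of p UNIV] by blast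
  then have "(G - u) \<bullet> G - (G - u) \<bullet> u = 0" by metis
  then have "(G - u) \<bullet> (G - u) = 0" by (simp add: inner_diff_right)
  then show ?thesis by simp
qed

lemma grad_ineq:
  fixes f :: "'a::real_inner \<Rightarrow> real"
  assumes cv: "convex_on UNIV f" and gd: "\<forall>u. GDERIV f u :> gf u"
  shows "f x + gf x \<bullet> (y - x) \<le> f y"
proof -
  define d where "d = y - x"
  define \<phi> where "\<phi> = (\<lambda>t::real. f (x + t *\<^sub>R d))"
  have cphi: "convex_on UNIV \<phi>"
  proof (rule convex_onI)
    fix t :: real and u v :: real assume t: "0 < t" "t < 1"
    have "x + ((1 - t) *\<^sub>R u + t *\<^sub>R v) *\<^sub>R d = (1 - t) *\<^sub>R (x + u *\<^sub>R d) + t *\<^sub>R (x + v *\<^sub>R d)"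
      by (simp add: algebra_simps)
    then show "\<phi> ((1 - t) *\<^sub>R u + t *\<^sub>R v) \<le> (1 - t) * \<phi> u + t * \<phi> v"
      unfolding \<phi>_def using convex_onD[OF cv, of t] t by auto
  qed auto
  have "((\<lambda>t. x + t *\<^sub>R d) has_derivative (\<lambda>t. t *\<^sub>R d)) (at 0)"
    by (auto intro!: derivative_eq_intros)
  moreover have "(f has_derivative (\<lambda>h. h \<bullet> gf x)) (at (x + 0 *\<^sub>R d))"
    using gd unfolding gderiv_def by simp
  ultimately have "(\<phi> has_derivative (\<lambda>t. (t *\<^sub>R d) \<bullet> gf x)) (at 0)"
    unfolding \<phi>_def using has_derivative_compose[of "\<lambda>t. x + t *\<^sub>R d" "\<lambda>t. t *\<^sub>R d" 0 UNIV f] by fastforce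
  then have "(\<phi> has_field_derivative (d \<bullet> gf x)) (at 0)"
    unfolding has_field_derivative_def by (simp add: mult.commute inner_commute) (metis (no_types, lifting) ext mult.commute)
  then have "\<phi> 1 - \<phi> 0 \<ge> (d \<bullet> gf x) * (1 - 0)"
    using convex_on_imp_above_tangent[OF cphi, of 0 1] by auto
  then show ?thesis unfolding \<phi>_def d_def by (simp add: inner_commute)
qed

lemma argmin_conj_grad:
  fixes H :: "'a::real_inner \<Rightarrow> ereal"
  assumes Hgt: "\<forall>u. H u > -\<infinity>" and bd: "\<forall>u. H u < \<infinity> \<longrightarrow> norm u \<le> B"
    and u0: "H u0 < \<infinity>"
    and am: "is_argmin (\<lambda>u. ereal (s \<bullet> u) + H u) x0"
    and gd: "GDERIV (\<lambda>q. real_of_ereal (conj H q)) (-s) :> G"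
  shows "x0 = G"
proof -
  have m: "\<forall>u. ereal (s \<bullet> x0) + H x0 \<le> ereal (s \<bullet> u) + H u" using am unfolding is_argmin_def by blast
  have "ereal (s \<bullet> x0) + H x0 \<le> ereal (s \<bullet> u0) + H u0" using m by blast
  then have "H x0 < \<infinity>" using u0 by (cases "H x0"; cases "H u0") auto
  then obtain c where c: "H x0 = ereal c" using Hgt by (cases "H x0") auto
  have le: "s \<bullet> x0 + c \<le> s \<bullet> u + d" if "H u = ereal d" for u d
    using m[rule_format, of u] c that by simp
  have lower: "ereal (p \<bullet> x0 - c) \<le> conj H p" for p
    unfolding conj_def by (rule SUP_upper2[of x0]) (auto simp: c)
  have upper: "conj H p \<le> ereal (- s \<bullet> x0 - c + norm (p + s) * B)" for p
    unfolding conj_def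
  proof (rule SUP_least)
    fix u
    show "ereal (p \<bullet> u) - H u \<le> ereal (- s \<bullet> x0 - c + norm (p + s) * B)"
    proof (cases "H u")
      case (real d)
      have nu: "norm u \<le> B" using bd real by auto
      have "p \<bullet> u = - s \<bullet> u + (p + s) \<bullet> u" by (simp add: inner_add_left)
      also have "(p + s) \<bullet> u \<le> norm (p + s) * norm u" by (rule norm_cauchy_schwarz)
      also have "\<dots> \<le> norm (p + s) * B" using nu by (simp add: mult_left_mono)
      finally have "p \<bullet> u - d \<le> - s \<bullet> x0 - c + norm (p + s) * B" using le[OF real] by simp
      then show ?thesis using real by simp
    next
      case PInf then show ?thesis by simp
    next
      case MInf then show ?thesis using Hgt by simp
    qed
  qed
  have fin: "\<bar>conj H p\<bar> \<noteq> \<infinity>" for p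
    using lower[of p] upper[of p] by auto
  have "\<forall>p'. real_of_ereal (conj H (-s)) + (p' - (-s)) \<bullet> x0 \<le> real_of_ereal (conj H p')"
  proof
    fix p'
    have e1: "real_of_ereal (conj H (-s)) \<le> - s \<bullet> x0 - c"
      using upper[of "-s"] fin[of "-s"] by (cases "conj H (-s)") auto
    have e2: "p' \<bullet> x0 - c \<le> real_of_ereal (conj H p')"
      using lower[of p'] fin[of p'] by (cases "conj H p'") auto
    show "real_of_ereal (conj H (-s)) + (p' - (-s)) \<bullet> x0 \<le> real_of_ereal (conj H p')"
      using e1 e2 by (simp add: inner_add_left)
  qed
  from grad_min_unique[OF gd this] show ?thesis .
qed

lemma conj_at_grad:
  fixes f :: "'a::real_inner \<Rightarrow> real"
  assumes cv: "convex_on UNIV f" and gd: "\<forall>u. GDERIV f u :> gf u"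
  shows "conj (\<lambda>u. ereal (f u)) (gf x) = ereal (gf x \<bullet> x - f x)"
  unfolding conj_def
proof (rule antisym)
  show "(SUP u. ereal (gf x \<bullet> u) - ereal (f u)) \<le> ereal (gf x \<bullet> x - f x)"
  proof (rule SUP_least)
    fix u
    have "f x + gf x \<bullet> (u - x) \<le> f u" by (rule grad_ineq[OF cv gd])
    then show "ereal (gf x \<bullet> u) - ereal (f u) \<le> ereal (gf x \<bullet> x - f x)"
      by (simp add: inner_diff_right)
  qed
  show "ereal (gf x \<bullet> x - f x) \<le> (SUP u. ereal (gf x \<bullet> u) - ereal (f u))"
    by (rule SUP_upper2[of x]) auto
qed

lemma conj_ge:
  "ereal (q \<bullet> u - f u) \<le> conj (\<lambda>u. ereal (f u)) q"
  unfolding conj_def by (rule SUP_upper2[of u]) auto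

lemma conj_min_grad:
  fixes f :: "'a::real_inner \<Rightarrow> real"
  assumes gd: "\<forall>u. GDERIV f u :> gf u"
    and r: "conj (\<lambda>u. ereal (f u)) q = ereal r" and le: "r - xb \<bullet> q \<le> - f xb"
  shows "q = gf xb"
proof -
  have "\<forall>u. f xb + (u - xb) \<bullet> q \<le> f u"
  proof
    fix u
    have "ereal (q \<bullet> u - f u) \<le> ereal r" using conj_ge[of q u f] r by simp
    then show "f xb + (u - xb) \<bullet> q \<le> f u" using le by (simp add: inner_diff_left inner_diff_right inner_commute)
  qed
  moreover have "GDERIV f xb :> gf xb" using gd by blast
  ultimately show ?thesis using grad_min_unique by blast
qed


lemma gem_step:
  fixes f :: "'a::real_inner \<Rightarrow> real"
  assumes cv: "convex_on UNIV f" and gd: "\<forall>u. GDERIV f u :> gf u"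
    and fs_def: "fs = conj (\<lambda>u. ereal (f u))"
    and a0: "a > 0" and t0: "t > 0" and L0: "L > 0"
    and gk: "gk = gf xk"
    and am: "is_argmin (\<lambda>q. ereal a * (ereal (- vh \<bullet> q) + fs q) + ereal t * (ereal L * (fs q - fs gk - ereal (xk \<bullet> (q - gk))))) q'"
    and xb: "xb = (a / (a + t*L)) *\<^sub>R vh + (t*L/(a + t*L)) *\<^sub>R xk"
  shows "q' = gf xb"
proof -
  define C where "C = gf xk \<bullet> xk - f xk"
  have fC: "fs gk = ereal C" unfolding fs_def gk C_def by (rule conj_at_grad[OF cv gd])
  define q0 where "q0 = gf xb"
  define r0 where "r0 = q0 \<bullet> xb - f xb"
  have f0: "fs q0 = ereal r0" unfolding fs_def q0_def r0_def by (rule conj_at_grad[OF cv gd])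
  define Obj where "Obj = (\<lambda>q. ereal a * (ereal (- vh \<bullet> q) + fs q) + ereal t * (ereal L * (fs q - fs gk - ereal (xk \<bullet> (q - gk)))))"
  have objr: "Obj q = ereal (a * (- vh \<bullet> q + r) + t * (L * (r - C - xk \<bullet> (q - gk))))"
    if "fs q = ereal r" for q r
    unfolding Obj_def using that fC by simp
  have objinf: "Obj q = \<infinity>" if "fs q = \<infinity>" for q
    unfolding Obj_def using that fC a0 t0 L0 by simp
  have le: "Obj q' \<le> Obj q0" using am unfolding is_argmin_def Obj_def by blast
  have "fs q' \<noteq> -\<infinity>" using conj_ge[of q' 0 f] unfolding fs_def by auto
  moreover have "fs q' \<noteq> \<infinity>" using le objinf objr[OF f0] by auto
  ultimately obtain r' where r': "fs q' = ereal r'" by (cases "fs q'") auto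
  have ineq: "a * (- vh \<bullet> q' + r') + t * (L * (r' - C - xk \<bullet> (q' - gk)))
      \<le> a * (- vh \<bullet> q0 + r0) + t * (L * (r0 - C - xk \<bullet> (q0 - gk)))"
    using le objr[OF r'] objr[OF f0] by simp
  define c where "c = a + t * L"
  have c0: "c > 0" unfolding c_def using a0 t0 L0 by (simp add: add_pos_pos)
  have xbq: "c * (xb \<bullet> q) = a * (vh \<bullet> q) + t * L * (xk \<bullet> q)" for q
    unfolding xb c_def[symmetric] using c0 by (simp add: inner_add_left field_simps)
  have "c * (r' - xb \<bullet> q') \<le> c * (r0 - xb \<bullet> q0)"
    using ineq xbq[of q'] xbq[of q0] unfolding c_def by (simp add: inner_diff_right algebra_simps)
  then have "r' - xb \<bullet> q' \<le> r0 - xb \<bullet> q0" using c0 by simp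
  also have "r0 - xb \<bullet> q0 = - f xb" unfolding r0_def by (simp add: inner_commute)
  finally show ?thesis using conj_min_grad[OF gd, of q' r' xb] r' unfolding fs_def by simp
qed


theorem proposition5p3:
  fixes N :: "'a::euclidean_space \<Rightarrow> real"
    and f :: "'a \<Rightarrow> real" and gf :: "'a \<Rightarrow> 'a"
    and h w :: "'a \<Rightarrow> ereal"
    and L \<alpha> :: real
    and gc :: "'a \<Rightarrow> 'a"
    and xt s x y :: "nat \<Rightarrow> 'a"
    and g z vh :: "nat \<Rightarrow> 'a" and v :: "int \<Rightarrow> 'a"
    and \<tau> A :: "nat \<Rightarrow> real" and a :: "int \<Rightarrow> real"
  defines "h\<alpha> \<equiv> (\<lambda>u. h u + ereal \<alpha> * w u)"
    and "lam \<equiv> 2 * \<alpha> / (\<alpha> + sqrt (\<alpha>\<^sup>2 + 4 * L * \<alpha>))"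
    and "fs \<equiv> conj (\<lambda>u. ereal (f u))"
  assumes norm: "is_norm N"
    and L_pos: "L > 0"
    and f_convex: "convex_on UNIV f"
    and f_grad: "\<forall>u. GDERIV f u :> gf u"
    and f_smooth: "L_smooth N L f"
    and h_closed: "closed_fun h" and h_proper: "proper_fun h" and h_convex: "convex_fun h"
    and h_bdd: "bounded (edom h)"
    and w_nonneg: "\<forall>u. w u \<ge> 0"
    and w_closed: "closed_fun w"
    and w_sc: "strongly_convex_on N (edom h) w"
    and w_max: "\<exists>M::real. \<forall>u\<in>edom h. w u \<le> ereal M"
    and conj_grad: "\<forall>q. GDERIV (\<lambda>q'. real_of_ereal (conj h\<alpha> q')) q :> gc q"
    and \<alpha>_pos: "\<alpha> > 0"
    and y0_dom: "y 0 \<in> edom h"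
    \<comment> \<open>TAA\<close>
    and taa_s0: "s 0 = gf (y 0)"
    and taa_xt0: "xt 0 = y 0"
    and taa_x0: "is_argmin (\<lambda>u. ereal (s 0 \<bullet> u) + h\<alpha> u) (x 0)"
    and taa_xt: "\<forall>k. xt (Suc k) = (1 - lam) *\<^sub>R y k + lam *\<^sub>R x k"
    and taa_s: "\<forall>k. s (Suc k) = (1 - lam) *\<^sub>R s k + lam *\<^sub>R gf (xt (Suc k))"
    and taa_x: "\<forall>k. is_argmin (\<lambda>u. ereal (s (Suc k) \<bullet> u) + h\<alpha> u) (x (Suc k))"
    and taa_y: "\<forall>k. y (Suc k) = (1 - lam) *\<^sub>R y k + lam *\<^sub>R x (Suc k)"
    \<comment> \<open>GEM with \<nu>* = L f*\<close>
    and gem_g0: "g 0 = gf (y 0)" and gem_z0: "z 0 = gf (y 0)"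
    and gem_v0: "v 0 = gc (- g 0)" and gem_vm1: "v (-1) = v 0"
    and gem_\<tau>0: "\<tau> 0 = \<alpha> / L" and gem_A0: "A 0 = 1" and gem_am1: "a (-1) = 0"
    and gem_a: "\<forall>k. a (int k) = (\<tau> k + sqrt ((\<tau> k)\<^sup>2 + 4 * \<tau> k * A k)) / 2"
    and gem_\<tau>: "\<forall>k. \<tau> (Suc k) = \<tau> k + \<alpha> * a (int k) / L"
    and gem_A: "\<forall>k. A (Suc k) = A k + a (int k)"
    and gem_vh: "\<forall>k. vh k = v (int k) + (a (int k - 1) / a (int k)) *\<^sub>R (v (int k) - v (int k - 1))"
    and gem_g: "\<forall>k. is_argmin
        (\<lambda>q. ereal (a (int k)) * (ereal (- vh k \<bullet> q) + fs q)
             + ereal (\<tau> k / \<alpha>) *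
                 (ereal L * (fs q - fs (g k) - ereal (xt k \<bullet> (q - g k)))))
        (g (Suc k))"
    and gem_z: "\<forall>k. z (Suc k) = (A k / A (Suc k)) *\<^sub>R z k + (a (int k) / A (Suc k)) *\<^sub>R g (Suc k)"
    and gem_v: "\<forall>k. v (int (Suc k)) = gc (- z (Suc k))"
  shows "\<forall>k. gf (xt k) = g k \<and> s k = z k \<and> x k = v (int k)"
proof -
  define r where "r = \<alpha> / L"
  define S where "S = sqrt (r\<^sup>2 + 4 * r)"
  define \<rho> where "\<rho> = (r + S) / 2"
  have r0: "r > 0" unfolding r_def using \<alpha>_pos L_pos by simp
  have S0: "S \<ge> 0" unfolding S_def using r0 by simp
  have S2: "S * S = r * r + 4 * r" unfolding S_def using r0
    by (metis add_nonneg_nonneg mult_nonneg_nonneg power2_eq_square real_sqrt_pow2 zero_le_numeral less_imp_le)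
  have \<rho>0: "\<rho> > 0" unfolding \<rho>_def using r0 S0 by simp
  have rho2: "\<rho> * \<rho> = r * (1 + \<rho>)"
  proof -
    have "\<rho> * \<rho> = (r * r + 2 * r * S + S * S) / 4" unfolding \<rho>_def by (simp add: field_simps)
    also have "\<dots> = r * (1 + \<rho>)" unfolding \<rho>_def using S2 by (simp add: field_simps)
    finally show ?thesis .
  qed
  have sq: "sqrt (\<alpha>\<^sup>2 + 4 * L * \<alpha>) = L * S"
  proof -
    have "\<alpha>\<^sup>2 + 4 * L * \<alpha> = L\<^sup>2 * (r\<^sup>2 + 4 * r)" unfolding r_def using L_pos
      by (simp add: field_simps power2_eq_square)
    then show ?thesis unfolding S_def using L_pos by (simp add: real_sqrt_mult)
  qed
  have lam_eq: "lam = \<rho> / (1 + \<rho>)"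
  proof -
    have "lam = 2 * (r * L) / (r * L + L * S)" unfolding lam_def sq r_def using L_pos by simp
    also have "\<dots> = (L * (2 * r)) / (L * (r + S))" by (simp add: algebra_simps)
    also have "\<dots> = (2 * r) / (r + S)" using L_pos by simp
    also have "\<dots> = r / \<rho>" unfolding \<rho>_def using r0 S0 by (simp add: field_simps)
    also have "\<dots> = \<rho> / (1 + \<rho>)" using rho2 \<rho>0 by (simp add: field_simps)
    finally show ?thesis .
  qed
  have AT: "A k > 0 \<and> \<tau> k = r * A k" for k
  proof (induction k)
    case 0 then show ?case using gem_A0 gem_\<tau>0 r_def by simp
  next
    case (Suc k)
    have tp: "\<tau> k > 0" using Suc r0 by simp
    then have "(\<tau> k)\<^sup>2 + 4 * \<tau> k * A k \<ge> 0" using Suc by (simp add: add_nonneg_nonneg)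
    then have sp: "sqrt ((\<tau> k)\<^sup>2 + 4 * \<tau> k * A k) \<ge> 0" by simp
    have "a (int k) = (\<tau> k + sqrt ((\<tau> k)\<^sup>2 + 4 * \<tau> k * A k)) / 2" using gem_a by blast
    moreover have "(\<tau> k + sqrt ((\<tau> k)\<^sup>2 + 4 * \<tau> k * A k)) / 2 > 0"
      by (intro divide_pos_pos add_pos_nonneg tp sp) simp
    ultimately have "a (int k) > 0" by simp
    moreover have "\<tau> (Suc k) = \<tau> k + r * a (int k)" using gem_\<tau> unfolding r_def by simp
    moreover have "A (Suc k) = A k + a (int k)" using gem_A by simp
    ultimately show ?case using Suc by (simp add: algebra_simps)
  qed
  have aA: "a (int k) = \<rho> * A k" for k
  proof -
    have "(\<tau> k)\<^sup>2 + 4 * \<tau> k * A k = (A k)\<^sup>2 * (r\<^sup>2 + 4 * r)" using AT[of k]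
      by (simp add: field_simps power2_eq_square)
    then have "sqrt ((\<tau> k)\<^sup>2 + 4 * \<tau> k * A k) = A k * S" unfolding S_def using AT[of k]
      by (simp add: real_sqrt_mult)
    then show ?thesis using gem_a AT[of k] unfolding \<rho>_def by (simp add: field_simps)
  qed
  have A_suc: "A (Suc k) = (1 + \<rho>) * A k" for k using gem_A aA by (simp add: algebra_simps)
  have e1: "A (Suc k) * (1 - lam) = A k" for k
    unfolding A_suc lam_eq using \<rho>0 by (simp add: field_simps)
  have e2: "A (Suc k) * lam = a (int k)" for k
    unfolding A_suc lam_eq aA using \<rho>0 by (simp add: field_simps)
  have am1: "a (int k - 1) *\<^sub>R (v (int k) - v (int k - 1)) = (lam * A k) *\<^sub>R (v (int k) - v (int k - 1))" for k
  proof (cases k)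
    case 0 then show ?thesis using gem_vm1 by simp
  next
    case (Suc j)
    have "int k - 1 = int j" using Suc by simp
    moreover have "lam * A k = a (int j)" using e2[of j] Suc by (simp add: mult.commute)
    ultimately show ?thesis by simp
  qed
  have hgt: "\<forall>u. h\<alpha> u > -\<infinity>"
  proof
    fix u
    have "h u > -\<infinity>" using h_proper unfolding proper_fun_def by blast
    moreover have "ereal \<alpha> * w u \<ge> 0" using w_nonneg \<alpha>_pos by simp
    ultimately show "h\<alpha> u > -\<infinity>" unfolding h\<alpha>_def by (cases "h u"; cases "ereal \<alpha> * w u") auto
  qed
  obtain B where B: "\<forall>u\<in>edom h. norm u \<le> B" using h_bdd unfolding bounded_iff by blast
  have hbd: "\<forall>u. h\<alpha> u < \<infinity> \<longrightarrow> norm u \<le> B"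
  proof (intro allI impI)
    fix u assume "h\<alpha> u < \<infinity>"
    moreover have "ereal \<alpha> * w u \<ge> 0" using w_nonneg \<alpha>_pos by simp
    ultimately have "h u < \<infinity>" unfolding h\<alpha>_def by (cases "h u"; cases "ereal \<alpha> * w u") auto
    then show "norm u \<le> B" using B unfolding edom_def by auto
  qed
  have u0: "h\<alpha> (y 0) < \<infinity>"
  proof -
    obtain M where M: "\<forall>u\<in>edom h. w u \<le> ereal M" using w_max by blast
    have "w (y 0) \<le> ereal M" using M y0_dom by blast
    then have "w (y 0) < \<infinity>" by (cases "w (y 0)") auto
    moreover have "w (y 0) \<ge> 0" using w_nonneg by blast
    ultimately obtain c where "w (y 0) = ereal c" by (cases "w (y 0)") auto
    moreover have "h (y 0) < \<infinity>" using y0_dom unfolding edom_def by simp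
    ultimately show ?thesis unfolding h\<alpha>_def by simp
  qed
  have xgc: "x k = gc (- s k)" for k
  proof -
    have am: "is_argmin (\<lambda>u. ereal (s k \<bullet> u) + h\<alpha> u) (x k)"
      using taa_x0 taa_x by (cases k) auto
    have gd: "GDERIV (\<lambda>q'. real_of_ereal (conj h\<alpha> q')) (- s k) :> gc (- s k)"
      using conj_grad by blast
    show ?thesis by (rule argmin_conj_grad[OF hgt hbd u0 am gd])
  qed
  have xv: "x k = v (int k)" if "s k = z k" for k
  proof (cases k)
    case 0 then show ?thesis using xgc[of 0] that gem_v0 gem_g0 gem_z0 by simp
  next
    case (Suc j) then show ?thesis using xgc[of k] that gem_v by simp
  qed
  have main: "gf (xt k) = g k \<and> s k = z k \<and> y k = xt k + lam *\<^sub>R (x k - v (int k - 1))" for k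
  proof (induction k)
    case 0
    have "x 0 = v 0" using xv[of 0] taa_s0 gem_z0 by simp
    then show ?case using taa_xt0 gem_g0 taa_s0 gem_z0 gem_vm1 by simp
  next
    case (Suc k)
    have IH1: "g k = gf (xt k)" and IH2: "s k = z k"
      and IH3: "y k = xt k + lam *\<^sub>R (x k - v (int k - 1))" using Suc by auto
    have xk: "x k = v (int k)" using xv IH2 by blast
    have ak0: "a (int k) > 0" using aA[of k] \<rho>0 AT[of k] by simp
    have vh_a: "a (int k) *\<^sub>R vh k = a (int k) *\<^sub>R v (int k) + (lam * A k) *\<^sub>R (v (int k) - v (int k - 1))"
      using gem_vh ak0 am1[of k] by (simp add: scaleR_right_distrib)
    have tL: "\<tau> k / \<alpha> * L = A k" using AT[of k] \<alpha>_pos L_pos unfolding r_def by (simp add: field_simps)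
    have A1: "a (int k) + A k = A (Suc k)" using gem_A by simp
    have "A (Suc k) *\<^sub>R xt (Suc k) = (A (Suc k) * (1 - lam)) *\<^sub>R y k + (A (Suc k) * lam) *\<^sub>R x k"
      using taa_xt by (simp add: scaleR_right_distrib)
    also have "\<dots> = A k *\<^sub>R (xt k + lam *\<^sub>R (v (int k) - v (int k - 1))) + a (int k) *\<^sub>R v (int k)"
      unfolding e1 e2 IH3 xk ..
    also have "\<dots> = a (int k) *\<^sub>R vh k + A k *\<^sub>R xt k"
      unfolding vh_a by (simp add: algebra_simps)
    finally have xtA: "A (Suc k) *\<^sub>R xt (Suc k) = a (int k) *\<^sub>R vh k + A k *\<^sub>R xt k" .
    have AS0: "A (Suc k) > 0" using AT by blast
    have xtS: "xt (Suc k) = (a (int k) / (a (int k) + \<tau> k / \<alpha> * L)) *\<^sub>R vh k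
        + (\<tau> k / \<alpha> * L / (a (int k) + \<tau> k / \<alpha> * L)) *\<^sub>R xt k"
    proof -
      have "xt (Suc k) = (1 / A (Suc k)) *\<^sub>R (A (Suc k) *\<^sub>R xt (Suc k))" using AS0 by simp
      also have "\<dots> = (a (int k) / A (Suc k)) *\<^sub>R vh k + (A k / A (Suc k)) *\<^sub>R xt k"
        unfolding xtA by (simp add: scaleR_right_distrib)
      finally show ?thesis unfolding tL A1 .
    qed
    have t0: "\<tau> k / \<alpha> > 0" using AT[of k] r0 \<alpha>_pos by simp
    have gS: "g (Suc k) = gf (xt (Suc k))"
      by (rule gem_step[OF f_convex f_grad fs_def[THEN meta_eq_to_obj_eq] ak0 t0 L_pos IH1 gem_g[rule_format, of k] xtS])
    have sS: "s (Suc k) = z (Suc k)"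
    proof -
      have "A k / A (Suc k) = 1 - lam" using e1[of k] AS0 by (simp add: field_simps)
      moreover have "a (int k) / A (Suc k) = lam" using e2[of k] AS0 by (simp add: field_simps)
      ultimately show ?thesis using taa_s gem_z IH2 gS by simp
    qed
    have yS: "y (Suc k) = xt (Suc k) + lam *\<^sub>R (x (Suc k) - v (int (Suc k) - 1))"
    proof -
      have Y: "y (Suc k) = (1 - lam) *\<^sub>R y k + lam *\<^sub>R x (Suc k)" using taa_y by blast
      have X: "xt (Suc k) = (1 - lam) *\<^sub>R y k + lam *\<^sub>R x k" using taa_xt by blast
      have "xt (Suc k) + lam *\<^sub>R (x (Suc k) - v (int (Suc k) - 1))
          = ((1 - lam) *\<^sub>R y k + lam *\<^sub>R x k) + lam *\<^sub>R (x (Suc k) - x k)" using X xk by simp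
      also have "\<dots> = (1 - lam) *\<^sub>R y k + lam *\<^sub>R x (Suc k)" by (simp add: algebra_simps)
      finally show ?thesis using Y by simp
    qed
    show ?case using gS sS yS by simp
  qed
  show ?thesis using main xv by blast
qed

end
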